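(* With probability $1-o(1)$ (as $n\to\infty$), the capacitated graph $G=(V,E,c)$ has total edge capacity $c(E)=\sum_{e\in E}c(e)=O(n)$.
   Context: All logarithms are base 2. Let $n$ be a large even integer and $V$ a set of $n$ vertices; $G=(V,E)$ is the random 10-regular multigraph whose edges are the union of 10 independent uniformly random perfect matchings on $V$; $\mathrm{dist}_G$ is hop distance. Fix a small constant $\varepsilon>0$, $\alpha=\frac{\log 5}{\log 5+1-\varepsilon}$, and an arbitrary terminal set $T\subseteq V$ with $|T|=k=\lfloor n/2^{(\log n)^\alpha}\rfloor$. For $i\ge 0$ let $N_i=\{u:\min_{t\in T}\mathrm{dist}_G(u,t)=i\}$ and $B_i=N_0\cup\dots\cup N_i$. Let $m=\lfloor 10n/(\log n)^\alpha\rfloor$ and $r=\min\{i:|B_i|\ge 2m\}-1$. Edge capacities: let $E_{r+1}$ be the set of edges between $N_r$ and $N_{r+1}$. Build an edge set $E_T$ with values $c'$: for each $u\in N_r$, let $E_u$ be the set of edges of $E_{r+1}$ incident to $u$, pick an arbitrary edge $e_u$ from $u$ to a vertex of $N_{r-1}$, add $e_u$ to $E_T$ with $c'(e_u)=|E_u|$. Then for $i=r-1,r-2,\dots,1$ in turn, for each $u\in N_i$ let $E_u$ be the set of edges currently in $E_T$ incident to $u$, pick an arbitrary edge $e_u$ from $u$ to a vertex of $N_{i-1}$, and add it to $E_T$ with $c'(e_u)=\sum_{e\in E_u}c'(e)$. Finally set $c(e)=\max\{c'(e),1\}$ for $e\in E_T$ and $c(e)=1$ for all other $e\in E$. *)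

theory Defs
  imports "HOL-Probability.Probability"
begin

text \<open>A perfect matching on {0..<n} is a fixed-point-free
involution on {0..<n} (identity outside, to make the set finite).
The random graph is a uniformly random 10-tuple of perfect matchings
(equivalently, 10 independent uniform perfect matchings).
An edge of the multigraph is a pair (j, a) with j < 10, a < n, a < ms j a:
the edge of matching j between a and ms j a.\<close>

definition perfect_matchings :: "nat \<Rightarrow> (nat \<Rightarrow> nat) set" where
  "perfect_matchings n = {f. (\<forall>i<n. f i < n \<and> f i \<noteq> i \<and> f (f i) = i) \<and> (\<forall>i. n \<le> i \<longrightarrow> f i = i)}"

definition graph_space :: "nat \<Rightarrow> (nat \<Rightarrow> nat \<Rightarrow> nat) set" where
  "graph_space n = PiE {..<10} (\<lambda>_. perfect_matchings n)"

definition edges :: "nat \<Rightarrow> (nat \<Rightarrow> nat \<Rightarrow> nat) \<Rightarrow> (nat \<times> nat) set" where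
  "edges n ms = {(j, a). j < 10 \<and> a < n \<and> a < ms j a}"

definition adj :: "nat \<Rightarrow> (nat \<Rightarrow> nat \<Rightarrow> nat) \<Rightarrow> (nat \<times> nat) set" where
  "adj n ms = {(u, v). u < n \<and> (\<exists>j<10. ms j u = v)}"

definition ball :: "nat \<Rightarrow> (nat \<Rightarrow> nat \<Rightarrow> nat) \<Rightarrow> nat set \<Rightarrow> nat \<Rightarrow> nat set" where
  "ball n ms T i = {u. u < n \<and> (\<exists>t\<in>T. \<exists>d\<le>i. (u, t) \<in> (adj n ms) ^^ d)}"

fun layer :: "nat \<Rightarrow> (nat \<Rightarrow> nat \<Rightarrow> nat) \<Rightarrow> nat set \<Rightarrow> nat \<Rightarrow> nat set" where
  "layer n ms T 0 = ball n ms T 0"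
| "layer n ms T (Suc i) = ball n ms T (Suc i) - ball n ms T i"

definition k_param :: "real \<Rightarrow> nat \<Rightarrow> nat" where
  "k_param \<alpha> n = nat \<lfloor>real n / 2 powr ((log 2 (real n)) powr \<alpha>)\<rfloor>"

definition m_param :: "real \<Rightarrow> nat \<Rightarrow> nat" where
  "m_param \<alpha> n = nat \<lfloor>10 * real n / (log 2 (real n)) powr \<alpha>\<rfloor>"

definition r_param :: "real \<Rightarrow> nat \<Rightarrow> (nat \<Rightarrow> nat \<Rightarrow> nat) \<Rightarrow> nat set \<Rightarrow> nat" where
  "r_param \<alpha> n ms T = (LEAST i. card (ball n ms T i) \<ge> 2 * m_param \<alpha> n) - 1"

text \<open>Vertices u in N_1 \<union> ... \<union> N_r, which receive an edge e_u.\<close>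
definition inner_set :: "nat \<Rightarrow> (nat \<Rightarrow> nat \<Rightarrow> nat) \<Rightarrow> nat set \<Rightarrow> nat \<Rightarrow> nat set" where
  "inner_set n ms T r = {u. \<exists>i. 1 \<le> i \<and> i \<le> r \<and> u \<in> layer n ms T i}"

text \<open>A valid choice: sigma u is the matching index of the chosen edge e_u from u
to a vertex of N_{i-1}, for every u in N_i, 1 \<le> i \<le> r.\<close>
definition valid_choice :: "nat \<Rightarrow> (nat \<Rightarrow> nat \<Rightarrow> nat) \<Rightarrow> nat set \<Rightarrow> nat \<Rightarrow> (nat \<Rightarrow> nat) \<Rightarrow> bool" where
  "valid_choice n ms T r \<sigma> = (\<forall>i. 1 \<le> i \<and> i \<le> r \<longrightarrow>
      (\<forall>u \<in> layer n ms T i. \<sigma> u < 10 \<and> ms (\<sigma> u) u \<in> layer n ms T (i - 1)))"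

text \<open>The edge e_u, normalized as an element of edges.\<close>
definition chosen_edge :: "(nat \<Rightarrow> nat \<Rightarrow> nat) \<Rightarrow> (nat \<Rightarrow> nat) \<Rightarrow> nat \<Rightarrow> nat \<times> nat" where
  "chosen_edge ms \<sigma> u = (\<sigma> u, min u (ms (\<sigma> u) u))"

text \<open>load d u is c'(e_u) for u in N_(r-d): for d = 0 it is the number of edges between
u and N_(r+1); for d+1 it is the sum of c'(e_w) over the edges e_w already in E_T that are
incident to u, i.e. over the w in N_(r-d) whose chosen edge ends at u.\<close>
primrec load :: "nat \<Rightarrow> (nat \<Rightarrow> nat \<Rightarrow> nat) \<Rightarrow> nat set \<Rightarrow> nat \<Rightarrow> (nat \<Rightarrow> nat) \<Rightarrow> nat \<Rightarrow> nat \<Rightarrow> nat" where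
  "load n ms T r \<sigma> 0 u = card {j. j < 10 \<and> ms j u \<in> layer n ms T (Suc r)}"
| "load n ms T r \<sigma> (Suc d) u =
     (\<Sum>w \<in> {w \<in> layer n ms T (r - d). ms (\<sigma> w) w = u}. load n ms T r \<sigma> d w)"

definition ET :: "nat \<Rightarrow> (nat \<Rightarrow> nat \<Rightarrow> nat) \<Rightarrow> nat set \<Rightarrow> nat \<Rightarrow> (nat \<Rightarrow> nat) \<Rightarrow> (nat \<times> nat) set" where
  "ET n ms T r \<sigma> = chosen_edge ms \<sigma> ` inner_set n ms T r"

definition cprime :: "nat \<Rightarrow> (nat \<Rightarrow> nat \<Rightarrow> nat) \<Rightarrow> nat set \<Rightarrow> nat \<Rightarrow> (nat \<Rightarrow> nat) \<Rightarrow> nat \<times> nat \<Rightarrow> nat" where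
  "cprime n ms T r \<sigma> e =
     (let u = (THE u. u \<in> inner_set n ms T r \<and> chosen_edge ms \<sigma> u = e);
          i = (THE i. u \<in> layer n ms T i)
      in load n ms T r \<sigma> (r - i) u)"

definition capacity :: "nat \<Rightarrow> (nat \<Rightarrow> nat \<Rightarrow> nat) \<Rightarrow> nat set \<Rightarrow> nat \<Rightarrow> (nat \<Rightarrow> nat) \<Rightarrow> nat \<times> nat \<Rightarrow> nat" where
  "capacity n ms T r \<sigma> e =
     (if e \<in> ET n ms T r \<sigma> then max (cprime n ms T r \<sigma> e) 1 else 1)"

definition total_capacity :: "nat \<Rightarrow> (nat \<Rightarrow> nat \<Rightarrow> nat) \<Rightarrow> nat set \<Rightarrow> nat \<Rightarrow> (nat \<Rightarrow> nat) \<Rightarrow> nat" where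
  "total_capacity n ms T r \<sigma> = (\<Sum>e \<in> edges n ms. capacity n ms T r \<sigma> e)"

text \<open>The good event: r is well defined and, for every admissible sequence of arbitrary
choices of the edges e_u, c(E) \<le> C n.\<close>
definition good_event :: "real \<Rightarrow> real \<Rightarrow> nat \<Rightarrow> nat set \<Rightarrow> (nat \<Rightarrow> nat \<Rightarrow> nat) \<Rightarrow> bool" where
  "good_event \<alpha> C n T ms =
     ((\<exists>i. card (ball n ms T i) \<ge> 2 * m_param \<alpha> n) \<and>
      (\<forall>\<sigma>. valid_choice n ms T (r_param \<alpha> n ms T) \<sigma> \<longrightarrow>
         real (total_capacity n ms T (r_param \<alpha> n ms T) \<sigma>) \<le> C * real n))"

definition good_prob :: "real \<Rightarrow> real \<Rightarrow> nat \<Rightarrow> nat set \<Rightarrow> real" where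
  "good_prob \<alpha> C n T = measure_pmf.prob (pmf_of_set (graph_space n)) {ms. good_event \<alpha> C n T ms}"

end

theory Submission
  imports Defs "HOL-Real_Asymp.Real_Asymp"
begin
definition pm :: "nat set \<Rightarrow> (nat \<Rightarrow> nat) set" where
  "pm A = {f. (\<forall>i\<in>A. f i \<in> A \<and> f i \<noteq> i \<and> f (f i) = i) \<and> (\<forall>i. i \<notin> A \<longrightarrow> f i = i)}"

lemma finite_pm: assumes "finite A" shows "finite (pm A)"
proof -
  have "pm A \<subseteq> (\<lambda>g i. if i \<in> A then g i else i) ` (PiE A (\<lambda>_. A))"
  proof
    fix f assume f: "f \<in> pm A"
    have "f = (\<lambda>i. if i \<in> A then restrict f A i else i)"
      using f by (auto simp: pm_def)
    moreover have "restrict f A \<in> PiE A (\<lambda>_. A)" using f by (auto simp: pm_def)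
    ultimately show "f \<in> (\<lambda>g i. if i \<in> A then g i else i) ` (PiE A (\<lambda>_. A))" by blast
  qed
  moreover have "finite (PiE A (\<lambda>_. A))" using assms by (simp add: finite_PiE)
  ultimately show ?thesis using finite_subset by blast
qed

lemma fiber_bij:
  assumes x: "x \<in> A" and y: "y \<in> A" "y \<noteq> x"
  shows "bij_betw (\<lambda>f. f(x:=x, y:=y)) {f\<in>pm A. f x = y \<and> P f}
           {g\<in>pm (A-{x,y}). P (g(x:=y, y:=x))}"
proof (rule bij_betw_byWitness[where f'="\<lambda>g. g(x:=y, y:=x)"])
  show "\<forall>f\<in>{f\<in>pm A. f x = y \<and> P f}. (f(x:=x, y:=y))(x:=y, y:=x) = f"
  proof
    fix f assume f: "f \<in> {f\<in>pm A. f x = y \<and> P f}"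
    then have "f y = x" using x by (auto simp: pm_def)
    then show "(f(x:=x, y:=y))(x:=y, y:=x) = f" using f by (auto simp: fun_eq_iff)
  qed
  show "\<forall>g\<in>{g\<in>pm (A-{x,y}). P (g(x:=y, y:=x))}. (g(x:=y, y:=x))(x:=x, y:=y) = g"
    by (auto simp: pm_def fun_eq_iff)
  show "(\<lambda>f. f(x:=x, y:=y)) ` {f\<in>pm A. f x = y \<and> P f} \<subseteq> {g\<in>pm (A-{x,y}). P (g(x:=y, y:=x))}"
  proof
    fix g assume "g \<in> (\<lambda>f. f(x:=x, y:=y)) ` {f\<in>pm A. f x = y \<and> P f}"
    then obtain f where f: "f \<in> pm A" "f x = y" "P f" and g: "g = f(x:=x, y:=y)" by auto
    have fy: "f y = x" using f x by (auto simp: pm_def)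
    have gg: "g(x:=y, y:=x) = f" using f fy g by (auto simp: fun_eq_iff)
    have "g \<in> pm (A-{x,y})"
      unfolding pm_def
    proof (intro CollectI conjI ballI allI impI)
      fix i assume i: "i \<in> A - {x,y}"
      have fi: "f i \<in> A" "f i \<noteq> i" "f (f i) = i" using f(1) i by (auto simp: pm_def)
      have "f i \<noteq> x"
      proof
        assume "f i = x" then have "i = y" using fi(3) f(2) by simp
        then show False using i by simp
      qed
      moreover have "f i \<noteq> y"
      proof
        assume "f i = y" then have "i = x" using fi(3) fy by simp
        then show False using i by simp
      qed
      ultimately show "g i \<in> A - {x,y}" "g i \<noteq> i" "g (g i) = i" using fi i g by auto
    next
      fix i assume "i \<notin> A - {x,y}"
      then show "g i = i" using f(1) g by (auto simp: pm_def)
    qed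
    then show "g \<in> {g\<in>pm (A-{x,y}). P (g(x:=y, y:=x))}" using gg f(3) by simp
  qed
  show "(\<lambda>g. g(x:=y, y:=x)) ` {g\<in>pm (A-{x,y}). P (g(x:=y, y:=x))} \<subseteq> {f\<in>pm A. f x = y \<and> P f}"
  proof
    fix f assume "f \<in> (\<lambda>g. g(x:=y, y:=x)) ` {g\<in>pm (A-{x,y}). P (g(x:=y, y:=x))}"
    then obtain g where g: "g \<in> pm (A-{x,y})" "P (g(x:=y, y:=x))" and f: "f = g(x:=y, y:=x)" by auto
    have k1: "f i \<in> A \<and> f i \<noteq> i \<and> f (f i) = i" if i: "i \<in> A" for i
    proof (cases "i = x \<or> i = y")
      case True then show ?thesis using f x y by auto
    next
      case False
      then have i2: "i \<in> A - {x,y}" using i by auto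
      then have "g i \<in> A - {x,y}" "g i \<noteq> i" "g (g i) = i" using g(1) by (auto simp: pm_def)
      then show ?thesis using f i2 by auto
    qed
    have k2: "f i = i" if "i \<notin> A" for i
      using that g(1) f x y by (auto simp: pm_def)
    have "f \<in> pm A" using k1 k2 by (simp add: pm_def)
    then show "f \<in> {f\<in>pm A. f x = y \<and> P f}" using f g(2) y by auto
  qed
qed

lemma card_decomp:
  assumes "finite A" "x \<in> A"
  shows "card {f\<in>pm A. P f} = (\<Sum>y\<in>A-{x}. card {g\<in>pm (A-{x,y}). P (g(x:=y, y:=x))})"
proof -
  have eq: "{f\<in>pm A. P f} = (\<Union>y\<in>A-{x}. {f\<in>pm A. f x = y \<and> P f})"
    using assms(2) by (auto simp: pm_def)
  have "card {f\<in>pm A. P f} = (\<Sum>y\<in>A-{x}. card {f\<in>pm A. f x = y \<and> P f})"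
    unfolding eq
    by (rule card_UN_disjoint) (use assms finite_pm in auto)
  also have "\<dots> = (\<Sum>y\<in>A-{x}. card {g\<in>pm (A-{x,y}). P (g(x:=y, y:=x))})"
    by (rule sum.cong, simp, rule bij_betw_same_card[OF fiber_bij]) (use assms in auto)
  finally show ?thesis .
qed

fun pmn :: "nat \<Rightarrow> nat" where
  "pmn 0 = 1" | "pmn (Suc 0) = 0" | "pmn (Suc (Suc n)) = Suc n * pmn n"

lemma card_pm: "finite A \<Longrightarrow> card (pm A) = pmn (card A)"
proof (induction "card A" arbitrary: A rule: less_induct)
  case less
  show ?case
  proof (cases "card A")
    case 0
    then have "A = {}" using less.prems by auto
    then have "pm A = {\<lambda>i. i}" by (auto simp: pm_def)
    then show ?thesis using 0 by simp
  next
    case (Suc n)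
    show ?thesis
    proof (cases n)
      case 0
      then have "card A = 1" using Suc by simp
      then obtain a where "A = {a}" by (rule card_1_singletonE)
      then have "pm A = {}" by (auto simp: pm_def)
      then show ?thesis using Suc 0 by simp
    next
      case (Suc n')
      have cA: "card A = Suc (Suc n')" using Suc \<open>card A = Suc n\<close> by simp
      then obtain x where x: "x \<in> A" by fastforce
      have "card (pm A) = card {f\<in>pm A. True}" by simp
      also have "\<dots> = (\<Sum>y\<in>A-{x}. card {g\<in>pm (A-{x,y}). True})"
        by (rule card_decomp) (use less.prems x in auto)
      also have "\<dots> = (\<Sum>y\<in>A-{x}. pmn n')"
      proof (rule sum.cong)
        fix y assume y: "y \<in> A - {x}"
        have c: "card (A-{x,y}) = n'" using cA x y less.prems by (auto simp: card_Diff_subset)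
        show "card {g\<in>pm (A-{x,y}). True} = pmn n'"
          using less.hyps[of "A-{x,y}"] c cA less.prems by auto
      qed simp
      also have "\<dots> = Suc n' * pmn n'" using cA x less.prems by simp
      finally show ?thesis using cA by simp
    qed
  qed
qed

lemma pmn_SS: "card A = Suc (Suc n) \<Longrightarrow> pmn (card A) = (card A - 1) * pmn (card A - 2)"
  by simp

lemma ratio:
  fixes U :: "nat set"
  assumes U: "finite U"
  shows "finite A \<Longrightarrow> S \<subseteq> A \<Longrightarrow> card S = 2*t \<Longrightarrow> card S < card A \<Longrightarrow>
    real (card {f\<in>pm A. \<forall>z\<in>S. f z \<in> U})
      \<le> (real (card U) / (real (card A) - real (card S)))^t * real (card (pm A))"
proof (induction t arbitrary: A S)
  case 0
  then have "S = {}" by (metis card_0_eq finite_subset mult_0_right)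
  then show ?case by simp
next
  case (Suc t)
  define D where "D = real (card A) - real (card S)"
  have D: "D > 0" using Suc.prems(4) by (simp add: D_def)
  have finS: "finite S" using Suc.prems finite_subset by blast
  then obtain x where x: "x \<in> S" using Suc.prems(3) by fastforce
  have xA: "x \<in> A" using x Suc.prems(2) by auto
  obtain n' where cA: "card A = Suc (Suc n')"
    using Suc.prems(3,4) by (metis Suc_lessE add_2_eq_Suc mult_Suc_right)
  define P2 where "P2 = real (pmn n')"
  define B where "B = (real (card U) / D)^t * P2"
  have B0: "B \<ge> 0" using D by (simp add: B_def P2_def)
  have bound: "real (card {g\<in>pm (A-{x,y}). \<forall>z\<in>S. (g(x:=y, y:=x)) z \<in> U})
       \<le> (if y \<in> U then B else 0)" if y: "y \<in> A - {x}" for y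
  proof (cases "y \<in> U")
    case False
    have E: "{g\<in>pm (A-{x,y}). \<forall>z\<in>S. (g(x:=y, y:=x)) z \<in> U} = {}"
    proof -
      { fix g assume "\<forall>z\<in>S. (g(x:=y, y:=x)) z \<in> U"
        then have "(g(x:=y, y:=x)) x \<in> U" using x by blast
        then have False using False y by auto }
      then show ?thesis by blast
    qed
    show ?thesis unfolding E using False by simp
  next
    case True
    have cS2: "2*t \<le> card (S - {x,y})"
    proof -
      have "card (S - {x,y}) \<ge> card S - card {x,y}" by (rule diff_card_le_card_Diff) simp
      moreover have "card {x,y} \<le> 2" by (simp add: card_insert_if)
      ultimately show ?thesis using Suc.prems(3) by simp
    qed
    obtain S2 where S2: "S2 \<subseteq> S - {x,y}" "card S2 = 2*t" "finite S2"
      using obtain_subset_with_card_n[OF cS2] by blast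
    have cA2: "card (A - {x,y}) = n'" using cA xA y Suc.prems(1) by (auto simp: card_Diff_subset)
    have cS2eq: "card S = card S2 + 2" using S2 Suc.prems(3) by simp
    have sub: "{g\<in>pm (A-{x,y}). \<forall>z\<in>S. (g(x:=y, y:=x)) z \<in> U} \<subseteq> {g\<in>pm (A-{x,y}). \<forall>z\<in>S2. g z \<in> U}"
    proof -
      { fix g z assume "\<forall>z\<in>S. (g(x:=y, y:=x)) z \<in> U" "z \<in> S2"
        moreover then have "z \<noteq> x" "z \<noteq> y" "z \<in> S" using S2 by auto
        ultimately have "g z \<in> U" by force }
      then show ?thesis by blast
    qed
    have fin2: "finite {g\<in>pm (A-{x,y}). \<forall>z\<in>S2. g z \<in> U}"
      using finite_pm Suc.prems(1) by auto
    have IH: "real (card {g\<in>pm (A-{x,y}). \<forall>z\<in>S2. g z \<in> U})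
       \<le> (real (card U) / (real (card (A-{x,y})) - real (card S2)))^t * real (card (pm (A-{x,y})))"
      by (rule Suc.IH) (use S2 Suc.prems cA2 cA cS2eq in auto)
    have "real (card (A-{x,y})) - real (card S2) = D"
      using cA2 cA cS2eq by (simp add: D_def)
    moreover have "card (pm (A-{x,y})) = pmn n'" using card_pm[of "A-{x,y}"] cA2 Suc.prems(1) by simp
    ultimately have "real (card {g\<in>pm (A-{x,y}). \<forall>z\<in>S2. g z \<in> U}) \<le> B"
      using IH by (simp add: B_def P2_def)
    then show ?thesis using True card_mono[OF fin2 sub] by simp
  qed
  have "real (card {f\<in>pm A. \<forall>z\<in>S. f z \<in> U})
      = (\<Sum>y\<in>A-{x}. real (card {g\<in>pm (A-{x,y}). \<forall>z\<in>S. (g(x:=y, y:=x)) z \<in> U}))"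
    using card_decomp[OF Suc.prems(1) xA, of "\<lambda>f. \<forall>z\<in>S. f z \<in> U"] by simp
  also have "\<dots> \<le> (\<Sum>y\<in>A-{x}. (if y \<in> U then B else 0))"
    by (rule sum_mono) (rule bound)
  also have "\<dots> = real (card ((A-{x}) \<inter> U)) * B"
    using Suc.prems(1) by (simp add: sum.If_cases)
  also have "\<dots> \<le> real (card U) * B"
    using B0 card_mono[OF U, of "(A-{x}) \<inter> U"] by (intro mult_right_mono) auto
  also have "\<dots> \<le> (real (card U) / D)^(Suc t) * real (card (pm A))"
  proof -
    have pA: "real (card (pm A)) = (real (card A) - 1) * P2"
      using card_pm[OF Suc.prems(1)] cA by (simp add: P2_def algebra_simps)
    have DA: "D \<le> real (card A) - 1" using Suc.prems(3) by (simp add: D_def)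
    have "real (card U) * B = (real (card U) / D)^t * real (card U) * P2" by (simp add: B_def)
    also have "\<dots> \<le> (real (card U) / D)^t * (real (card U) * ((real (card A) - 1) / D)) * P2"
    proof -
      have "1 \<le> (real (card A) - 1) / D" using DA D by simp
      then have "real (card U) \<le> real (card U) * ((real (card A) - 1) / D)"
        by (metis mult.right_neutral mult_left_mono of_nat_0_le_iff)
      then show ?thesis using D by (intro mult_right_mono mult_left_mono) (auto simp: P2_def)
    qed
    also have "\<dots> = (real (card U) / D)^(Suc t) * real (card (pm A))"
      using D by (simp only: pA) (simp add: field_simps)
    finally show ?thesis .
  qed
  finally show ?case by (simp add: D_def)
qed

lemma ball_mono: assumes ij: "i \<le> j" shows "ball n ms T i \<subseteq> ball n ms T j"
proof
  fix u assume "u \<in> ball n ms T i"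
  then have u: "u < n" and "\<exists>t\<in>T. \<exists>d\<le>i. (u, t) \<in> (adj n ms) ^^ d" unfolding ball_def by simp_all
  then obtain t d where t: "t \<in> T" "d \<le> i" "(u, t) \<in> (adj n ms) ^^ d" by blast
  have "d \<le> j" using t(2) ij by (rule le_trans)
  then have "\<exists>t\<in>T. \<exists>d\<le>j. (u, t) \<in> (adj n ms) ^^ d" using t by blast
  then show "u \<in> ball n ms T j" unfolding ball_def using u by simp
qed

lemma ball_sub: "ball n ms T i \<subseteq> {..<n}"
  unfolding ball_def lessThan_def by (rule Collect_mono) simp

lemma finite_ball: "finite (ball n ms T i)"
  by (rule finite_subset[OF ball_sub]) simp

lemma ball0: assumes T: "T \<subseteq> {..<n}" shows "ball n ms T 0 = T"
proof -
  have "ball n ms T 0 = {u. u < n \<and> u \<in> T}" unfolding ball_def by auto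
  also have "\<dots> = T" using T by auto
  finally show ?thesis .
qed

lemma pm_props: "ms \<in> graph_space n \<Longrightarrow> j < 10 \<Longrightarrow> u < n \<Longrightarrow>
   ms j u < n \<and> ms j u \<noteq> u \<and> ms j (ms j u) = u"
proof -
  assume ms: "ms \<in> graph_space n" and j: "j < 10" and u: "u < n"
  have j': "j \<in> {..<10}" using j by (simp only: lessThan_iff)
  have "ms j \<in> perfect_matchings n" using PiE_mem[OF ms[unfolded graph_space_def] j'] .
  then have "\<forall>i<n. ms j i < n \<and> ms j i \<noteq> i \<and> ms j (ms j i) = i"
    unfolding perfect_matchings_def by (simp only: mem_Collect_eq) blast
  then show ?thesis using u by blast
qed

lemma ball_step:
  assumes ms: "ms \<in> graph_space n" and u: "u \<in> ball n ms T i" and j: "j < 10"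
  shows "ms j u \<in> ball n ms T (Suc i)"
proof -
  from u obtain t d where un: "u < n" and t: "t \<in> T" "d \<le> i" "(u, t) \<in> (adj n ms) ^^ d"
    unfolding ball_def by blast
  have p: "ms j u < n" "ms j (ms j u) = u" using pm_props[OF ms j un] by auto
  have "\<exists>j'<10. ms j' (ms j u) = u" using p(2) j by blast
  then have "(ms j u, u) \<in> adj n ms" using p(1) unfolding adj_def by simp
  then have "(ms j u, t) \<in> (adj n ms) ^^ Suc d" using t(3) by (rule relpow_Suc_I2)
  moreover have "Suc d \<le> Suc i" using t(2) by simp
  ultimately have "\<exists>d'\<le>Suc i. (ms j u, t) \<in> (adj n ms) ^^ d'" by blast
  then have "\<exists>t\<in>T. \<exists>d'\<le>Suc i. (ms j u, t) \<in> (adj n ms) ^^ d'" using t(1) by blast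
  then show ?thesis using p(1) unfolding ball_def by simp
qed

lemma layer_sub_ball: "layer n ms T i \<subseteq> ball n ms T i"
proof (cases i)
  case 0 then show ?thesis by simp
next
  case (Suc j) then show ?thesis by (simp add: Diff_subset)
qed

lemma finite_layer: "finite (layer n ms T i)"
  by (rule finite_subset[OF layer_sub_ball finite_ball])

lemma layer_lt: "u \<in> layer n ms T i \<Longrightarrow> u < n"
  using subsetD[OF ball_sub subsetD[OF layer_sub_ball]] by simp

lemma layer_unique_aux: "a < b \<Longrightarrow> u \<in> layer n ms T a \<Longrightarrow> u \<notin> layer n ms T b"
proof -
  assume ab: "a < b" and ua: "u \<in> layer n ms T a"
  from ab obtain b' where b: "b = Suc b'" "a \<le> b'" by (cases b) auto
  have "u \<in> ball n ms T b'" using subsetD[OF ball_mono[OF b(2)] subsetD[OF layer_sub_ball ua]] .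
  then have "u \<notin> ball n ms T (Suc b') - ball n ms T b'" by (meson DiffD2)
  then show ?thesis using b(1) by simp
qed

lemma layer_unique: "u \<in> layer n ms T a \<Longrightarrow> u \<in> layer n ms T b \<Longrightarrow> a = b"
  using layer_unique_aux by (metis linorder_neqE_nat)

lemma growth:
  assumes ms: "ms \<in> graph_space n" and T: "T \<subseteq> {..<n}"
  and ex: "\<And>i. card (ball n ms T i) < M \<Longrightarrow> 2 * card (ball n ms T i) \<le> card (ball n ms T (Suc i))"
  shows "min M (2^i * card T) \<le> card (ball n ms T i)"
proof (induction i)
  case 0 then show ?case using ball0[OF T] by simp
next
  case (Suc i)
  have mono: "card (ball n ms T i) \<le> card (ball n ms T (Suc i))"
    by (rule card_mono[OF finite_ball ball_mono]) simp
  show ?case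
  proof (cases "card (ball n ms T i) < M")
    case True
    have "2 ^ i * card T \<le> card (ball n ms T i)"
      using Suc.IH True by (simp add: min_def split: if_splits)
    then have "2 ^ Suc i * card T \<le> 2 * card (ball n ms T i)" by simp
    also have "\<dots> \<le> card (ball n ms T (Suc i))" by (rule ex[OF True])
    finally show ?thesis by (rule min.coboundedI2)
  next
    case False
    then have "M \<le> card (ball n ms T (Suc i))" using mono by linarith
    then show ?thesis by (rule min.coboundedI1)
  qed
qed

lemma load_sum:
  "(\<Sum>u\<in>layer n ms T (r - d). load n ms T r \<sigma> d u) \<le> 10 * card (layer n ms T r)"
proof (induction d)
  case 0
  have "(\<Sum>u\<in>layer n ms T r. load n ms T r \<sigma> 0 u) \<le> (\<Sum>u\<in>layer n ms T r. 10)"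
  proof (rule sum_mono)
    fix u
    have "card {j. j < 10 \<and> ms j u \<in> layer n ms T (Suc r)} \<le> card {..<(10::nat)}"
      by (rule card_mono) auto
    then show "load n ms T r \<sigma> 0 u \<le> 10" by simp
  qed
  then show ?case by simp
next
  case (Suc d)
  define f where "f w = ms (\<sigma> w) w" for w
  define X where "X = layer n ms T (r - d)"
  define Y where "Y = layer n ms T (r - Suc d)"
  define Sx where "Sx = {w\<in>X. f w \<in> Y}"
  have st1: "load n ms T r \<sigma> (Suc d) u = sum (load n ms T r \<sigma> d) {w\<in>Sx. f w = u}" if u: "u \<in> Y" for u
  proof -
    have "{w\<in>Sx. f w = u} = {w \<in> layer n ms T (r - d). ms (\<sigma> w) w = u}"
      using u unfolding Sx_def X_def f_def by blast
    then show ?thesis by simp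
  qed
  have "(\<Sum>u\<in>Y. load n ms T r \<sigma> (Suc d) u) = (\<Sum>u\<in>Y. sum (load n ms T r \<sigma> d) {w\<in>Sx. f w = u})"
    using st1 by (rule sum.cong[OF refl])
  also have "\<dots> = sum (load n ms T r \<sigma> d) Sx"
  proof (rule sum.group)
    show "finite Sx" unfolding Sx_def X_def using finite_layer by simp
    show "finite Y" unfolding Y_def by (rule finite_layer)
    show "f ` Sx \<subseteq> Y" unfolding Sx_def by blast
  qed
  also have "\<dots> \<le> sum (load n ms T r \<sigma> d) X"
    by (rule sum_mono2) (unfold Sx_def X_def, use finite_layer in blast, blast, simp)
  finally have "(\<Sum>u\<in>Y. load n ms T r \<sigma> (Suc d) u) \<le> sum (load n ms T r \<sigma> d) X" .
  then show ?case using Suc.IH unfolding X_def Y_def by linarith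
qed

lemma inner_layer: "u \<in> inner_set n ms T r \<longleftrightarrow> (\<exists>i\<in>{1..r}. u \<in> layer n ms T i)"
  unfolding inner_set_def by auto

lemma cprime_eval:
  assumes ms: "ms \<in> graph_space n" and v: "valid_choice n ms T r \<sigma>"
    and u: "u \<in> layer n ms T i" and i: "1 \<le> i" "i \<le> r"
  shows "cprime n ms T r \<sigma> (chosen_edge ms \<sigma> u) = load n ms T r \<sigma> (r - i) u"
proof -
  have uniq: "u' = u" if u': "u' \<in> inner_set n ms T r" "chosen_edge ms \<sigma> u' = chosen_edge ms \<sigma> u" for u'
  proof -
    obtain i' where i': "i' \<in> {1..r}" "u' \<in> layer n ms T i'" using u'(1) inner_layer by blast
    have vu: "\<sigma> u < 10" "ms (\<sigma> u) u \<in> layer n ms T (i - 1)" using v u i unfolding valid_choice_def by auto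
    have vu': "\<sigma> u' < 10" "ms (\<sigma> u') u' \<in> layer n ms T (i' - 1)" using v i' unfolding valid_choice_def by auto
    define j where "j = \<sigma> u"
    have sj: "\<sigma> u' = j" and mn: "min u' (ms j u') = min u (ms j u)"
      using u'(2) by (auto simp: chosen_edge_def j_def)
    have pu: "ms j (ms j u) = u" using pm_props[OF ms vu(1) layer_lt[OF u]] by (simp add: j_def)
    have pu': "ms j (ms j u') = u'" using pm_props[OF ms vu'(1) layer_lt[OF i'(2)]] sj by simp
    have "u' = u \<or> u' = ms j u"
    proof -
      have "u' = u \<or> u' = ms j u \<or> ms j u' = u \<or> ms j u' = ms j u"
        using mn by (auto simp: min_def split: if_splits)
      then show ?thesis using pu pu' by metis
    qed
    moreover have "u' \<noteq> ms j u"
    proof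
      assume e: "u' = ms j u"
      then have "u' \<in> layer n ms T (i - 1)" using vu(2) by (simp add: j_def)
      then have ii: "i' = i - 1" using layer_unique i'(2) by blast
      have "ms j u' = u" using e pu by simp
      then have "u \<in> layer n ms T (i' - 1)" using vu'(2) sj by simp
      then have "i = i' - 1" using layer_unique u by blast
      then show False using ii i by simp
    qed
    ultimately show ?thesis by blast
  qed
  have uin: "u \<in> inner_set n ms T r" using u i inner_layer by fastforce
  have t1: "(THE u'. u' \<in> inner_set n ms T r \<and> chosen_edge ms \<sigma> u' = chosen_edge ms \<sigma> u) = u"
    by (rule the_equality) (use uin uniq in auto)
  have t2: "(THE i'. u \<in> layer n ms T i') = i"
    by (rule the_equality) (use u layer_unique in auto)
  show ?thesis unfolding cprime_def Let_def t1 t2 ..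
qed

lemma finite_inner: "finite (inner_set n ms T r)"
proof -
  have "inner_set n ms T r \<subseteq> {..<n}" unfolding inner_set_def using layer_lt by blast
  then show ?thesis using finite_subset by blast
qed

lemma total_bound:
  assumes ms: "ms \<in> graph_space n" and v: "valid_choice n ms T r \<sigma>"
  shows "total_capacity n ms T r \<sigma> \<le> 10 * n + 10 * r * card (layer n ms T r)"
proof -
  let ?E = "edges n ms" and ?ET = "ET n ms T r \<sigma>" and ?c = "cprime n ms T r \<sigma>"
  have finE: "finite ?E" and cE: "card ?E \<le> 10 * n"
  proof -
    have sub: "?E \<subseteq> {..<10} \<times> {..<n}" unfolding edges_def by auto
    then show "finite ?E" using finite_subset by blast
    have "card ?E \<le> card ({..<10::nat} \<times> {..<n})" by (rule card_mono[OF _ sub]) simp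
    then show "card ?E \<le> 10 * n" by (simp add: card_cartesian_product)
  qed
  have finET: "finite ?ET" unfolding ET_def using finite_inner by simp
  have "total_capacity n ms T r \<sigma> \<le> (\<Sum>e\<in>?E. 1 + (if e \<in> ?ET then ?c e else 0))"
    unfolding total_capacity_def capacity_def by (rule sum_mono) auto
  also have "\<dots> = card ?E + (\<Sum>e\<in>?E. if e \<in> ?ET then ?c e else 0)"
    by (simp only: sum.distrib) simp
  also have "(\<Sum>e\<in>?E. if e \<in> ?ET then ?c e else 0) = (\<Sum>e\<in>?E \<inter> ?ET. ?c e)"
    using finE by (simp add: sum.If_cases)
  also have "\<dots> \<le> (\<Sum>e\<in>?ET. ?c e)" by (rule sum_mono2[OF finET]) auto
  also have "\<dots> \<le> (\<Sum>u\<in>inner_set n ms T r. ?c (chosen_edge ms \<sigma> u))"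
    unfolding ET_def by (rule order_trans[OF sum_image_le[OF finite_inner]]) (auto simp: o_def)
  also have "inner_set n ms T r = (\<Union>i\<in>{1..r}. layer n ms T i)" using inner_layer by blast
  also have "(\<Sum>u\<in>(\<Union>i\<in>{1..r}. layer n ms T i). ?c (chosen_edge ms \<sigma> u))
      = (\<Sum>i\<in>{1..r}. \<Sum>u\<in>layer n ms T i. ?c (chosen_edge ms \<sigma> u))"
    by (rule sum.UNION_disjoint) (auto simp: finite_layer dest: layer_unique)
  also have "\<dots> = (\<Sum>i\<in>{1..r}. \<Sum>u\<in>layer n ms T (r - (r - i)). load n ms T r \<sigma> (r - i) u)"
    by (rule sum.cong, simp, rule sum.cong) (auto simp: cprime_eval[OF ms v])
  also have "\<dots> \<le> (\<Sum>i\<in>{1..r}. 10 * card (layer n ms T r))"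
    by (rule sum_mono) (rule load_sum)
  also have "\<dots> = 10 * r * card (layer n ms T r)" by simp
  finally show ?thesis using cE by simp
qed

lemma pow_fact_le_exp: "(x::real) \<ge> 0 \<Longrightarrow> x ^ n / fact n \<le> exp x"
proof -
  assume x: "x \<ge> 0"
  have s: "(\<lambda>k. x ^ k / fact k) sums exp x"
    using exp_converges[of x] by (simp add: scaleR_conv_of_real divide_inverse mult.commute)
  have "(\<Sum>k\<in>{n}. x ^ k / fact k) \<le> (\<Sum>k. x ^ k / fact k)"
    by (rule sum_le_suminf) (use s x in \<open>auto simp: sums_iff\<close>)
  then show ?thesis using s by (simp add: sums_iff)
qed

lemma fact_choose_le: assumes True: "s \<le> n" shows "fact s * (n choose s) \<le> (n::nat) ^ s"
proof -
  have e: "fact s * (n choose s) * fact (n - s) = (fact n :: nat)"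
    using binomial_fact_lemma[OF True] by (simp add: ac_simps)
  have "fact s * (n choose s) = fact n div fact (n - s)"
    unfolding e[symmetric] by simp
  also have "\<dots> \<le> n ^ s" by (rule fact_div_fact_le_pow[OF True])
  finally show ?thesis .
qed

lemma fact_choose_le_real: assumes "fact s * (n choose s) \<le> (n::nat) ^ s"
  shows "(fact s :: real) * real (n choose s) \<le> real n ^ s"
proof -
  have "real (fact s * (n choose s)) \<le> real (n ^ s)" using assms by (rule of_nat_mono)
  then show ?thesis by simp
qed

lemma binom_bound:
  assumes "s \<ge> 1"
  shows "real (n choose s) \<le> (exp 1 * real n / real s) ^ s"
proof (cases "s \<le> n")
  case False
  then have z: "n choose s = 0" using binomial_eq_0[of n s] by simp
  show ?thesis unfolding z by simp
next
  case True
  have "(fact s :: real) * real (n choose s) \<le> real n ^ s"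
    by (rule fact_choose_le_real[OF fact_choose_le[OF True]])
  then have b1: "real (n choose s) \<le> real n ^ s / fact s"
    by (simp add: field_simps mult.commute)
  have b2: "real s ^ s / fact s \<le> exp (real s)" by (rule pow_fact_le_exp) simp
  have ex: "exp (real s) = exp 1 ^ s" using exp_of_nat_mult[of s 1] by simp
  have spos: "real s > 0" using assms by simp
  have eq: "real n ^ s / fact s = (real n / real s) ^ s * (real s ^ s / fact s)"
    using spos by (simp add: power_divide)
  have "real n ^ s / fact s \<le> (real n / real s) ^ s * exp (real s)"
    unfolding eq by (rule mult_left_mono[OF b2]) simp
  also have "\<dots> = (exp 1 * real n / real s) ^ s"
    unfolding ex by (simp add: power_mult_distrib[symmetric] mult.commute)
  finally show ?thesis using b1 by linarith
qed

lemma term_bound: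
  fixes n s u :: nat
  assumes s5: "5 \<le> s" and su: "s \<le> u" "u < 2 * s" and sn: "30000 * s \<le> n"
  shows "real (n choose s) * real (n choose u) * (real u / (real n - real (2 * (s div 2)))) ^ (10 * (s div 2))
     \<le> (1/4) ^ s"
proof -
  define t where "t = s div 2"
  define x where "x = real s / real n"
  define q where "q = exp 1 / x"
  have e3: "exp (1::real) \<le> 3" by (rule exp_le)
  have e0: "exp (1::real) \<ge> 1" by simp
  have spos: "real s > 0" using s5 by simp
  have npos: "real n > 0" using sn s5 by simp
  have xpos: "x > 0" unfolding x_def using spos npos by simp
  have xsmall: "x \<le> 1 / 30000" unfolding x_def using sn npos by (simp add: field_simps)
  have qalt: "exp 1 * real n / real s = q" unfolding q_def x_def using spos npos by simp
  have q1: "q \<ge> 1"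
  proof -
    have "1 / x \<ge> 1" using xpos xsmall by (simp add: field_simps)
    then have "1 * 1 \<le> exp 1 * (1 / x)" using e0 by (intro mult_mono) auto
    then show ?thesis unfolding q_def by simp
  qed
  have h1: "real (n choose s) \<le> q ^ s" unfolding qalt[symmetric] by (rule binom_bound) (use s5 in simp)
  have "real (n choose u) \<le> (exp 1 * real n / real u) ^ u" by (rule binom_bound) (use su s5 in simp)
  also have "\<dots> \<le> (exp 1 * real n / real s) ^ u"
  proof (rule power_mono)
    show "exp 1 * real n / real u \<le> exp 1 * real n / real s"
      by (rule divide_left_mono) (use su spos npos in auto)
    show "0 \<le> exp 1 * real n / real u" by simp
  qed
  also have "\<dots> = q ^ u" by (simp only: qalt)
  also have "\<dots> \<le> q ^ (2 * s)" by (rule power_increasing) (use su q1 in auto)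
  finally have h2: "real (n choose u) \<le> q ^ (2 * s)" .
  define b where "b = real u / (real n - real (2 * t))"
  have t2: "2 * t \<le> s" unfolding t_def by simp
  have den: "real n - real (2 * t) \<ge> real n / 2" using t2 sn by simp
  have b0: "b \<ge> 0" using den npos by (simp add: b_def)
  have b4: "b \<le> 4 * x"
  proof -
    have "b \<le> real u / (real n / 2)" unfolding b_def
      by (rule divide_left_mono) (use den npos in auto)
    also have "\<dots> \<le> 2 * real s / (real n / 2)"
      by (rule divide_right_mono) (use su npos in auto)
    also have "\<dots> = 4 * x" unfolding x_def by simp
    finally show ?thesis .
  qed
  have b1: "4 * x \<le> 1" using xsmall by simp
  have t10: "4 * s \<le> 10 * t" unfolding t_def using s5 by linarith
  have h3: "b ^ (10 * t) \<le> (4 * x) ^ (4 * s)"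
  proof -
    have "b ^ (10 * t) \<le> b ^ (4 * s)" by (rule power_decreasing[OF t10 b0]) (use b4 b1 in linarith)
    also have "\<dots> \<le> (4 * x) ^ (4 * s)" by (rule power_mono[OF b4 b0])
    finally show ?thesis .
  qed
  have "real (n choose s) * real (n choose u) * b ^ (10 * t) \<le> q ^ s * q ^ (2 * s) * (4 * x) ^ (4 * s)"
    by (intro mult_mono h1 h2 h3) (use q1 b0 in auto)
  also have "q ^ s * q ^ (2 * s) = (q ^ 3) ^ s"
    by (simp only: power_add[symmetric] power_mult[symmetric]) (simp add: mult.commute)
  also have "(4 * x) ^ (4 * s) = ((4 * x) ^ 4) ^ s"
    by (simp only: power_mult[symmetric])
  also have "(q ^ 3) ^ s * ((4 * x) ^ 4) ^ s = (q ^ 3 * (4 * x) ^ 4) ^ s"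
    by (simp only: power_mult_distrib)
  also have "q ^ 3 * (4 * x) ^ 4 = 256 * exp 1 ^ 3 * x"
    unfolding q_def using xpos by (simp add: power_divide power_mult_distrib field_simps eval_nat_numeral)
  also have "(256 * exp 1 ^ 3 * x) ^ s \<le> (1/4) ^ s"
  proof (rule power_mono)
    have "exp (1::real) ^ 3 \<le> 3 ^ 3" by (rule power_mono[OF e3]) simp
    then have "exp (1::real) ^ 3 * x \<le> 27 * (1 / 30000)"
      using xsmall xpos by (intro mult_mono) auto
    then show "256 * exp 1 ^ 3 * x \<le> 1 / 4" by simp
    show "0 \<le> 256 * exp 1 ^ 3 * x" using xpos by simp
  qed
  finally show ?thesis by (simp add: b_def t_def)
qed

lemma pm_eq: "perfect_matchings n = pm {..<n}"
  unfolding perfect_matchings_def pm_def by auto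

definition badSU :: "nat \<Rightarrow> nat set \<Rightarrow> nat set \<Rightarrow> (nat \<Rightarrow> nat \<Rightarrow> nat) set" where
  "badSU n S U = {ms \<in> graph_space n. \<forall>j<10. \<forall>z\<in>S. ms j z \<in> U}"

definition subs :: "nat \<Rightarrow> nat \<Rightarrow> nat set set" where
  "subs n s = {S. S \<subseteq> {..<n} \<and> card S = s}"

definition badAll :: "nat \<Rightarrow> nat \<Rightarrow> nat \<Rightarrow> (nat \<Rightarrow> nat \<Rightarrow> nat) set" where
  "badAll n k M = (\<Union>s\<in>{k..<M}. (\<Union>u\<in>{s..<2 * s}. (\<Union>S\<in>subs n s. (\<Union>U\<in>subs n u. badSU n S U))))"

lemma finite_subs: "finite (subs n s)"
  unfolding subs_def by (rule finite_subset[of _ "Pow {..<n}"]) auto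

lemma card_subs: "card (subs n s) = n choose s"
  unfolding subs_def using n_subsets[of "{..<n}" s] by simp

lemma real_card_UN_le: "finite I \<Longrightarrow> real (card (\<Union>i\<in>I. A i)) \<le> (\<Sum>i\<in>I. real (card (A i)))"
proof -
  assume "finite I"
  then have "card (\<Union>i\<in>I. A i) \<le> (\<Sum>i\<in>I. card (A i))" by (rule card_UN_le)
  then have "real (card (\<Union>i\<in>I. A i)) \<le> real (\<Sum>i\<in>I. card (A i))" by (rule of_nat_mono)
  then show ?thesis by simp
qed

lemma badSU_PiE: "badSU n S U = PiE {..<10} (\<lambda>_. {f \<in> perfect_matchings n. \<forall>z\<in>S. f z \<in> U})"
  unfolding badSU_def graph_space_def by (auto simp: PiE_iff extensional_def)

lemma badSU_card:
  assumes S: "S \<subseteq> {..<n}" and U: "U \<subseteq> {..<n}" and t: "2 * (card S div 2) < n"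
  shows "real (card (badSU n S U))
     \<le> ((real (card U) / (real n - real (2 * (card S div 2)))) ^ (card S div 2)) ^ 10 * real (card (graph_space n))"
proof -
  define t where "t = card S div 2"
  define F where "F = {f \<in> perfect_matchings n. \<forall>z\<in>S. f z \<in> U}"
  have finS: "finite S" using S finite_subset by blast
  have "2 * t \<le> card S" unfolding t_def by simp
  then obtain S0 where S0: "S0 \<subseteq> S" "card S0 = 2 * t" "finite S0"
    using obtain_subset_with_card_n by blast
  have FF: "F \<subseteq> {f \<in> pm {..<n}. \<forall>z\<in>S0. f z \<in> U}" unfolding F_def pm_eq using S0 by blast
  have finF: "finite {f \<in> pm {..<n}. \<forall>z\<in>S0. f z \<in> U}" using finite_pm[of "{..<n}"] by simp
  have r: "real (card {f \<in> pm {..<n}. \<forall>z\<in>S0. f z \<in> U})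
     \<le> (real (card U) / (real (card {..<n}) - real (card S0))) ^ t * real (card (pm {..<n}))"
    by (rule ratio) (use U finite_subset S0 S t t_def in auto)
  have cF: "real (card F) \<le> (real (card U) / (real n - real (2 * t))) ^ t * real (card (perfect_matchings n))"
    using r card_mono[OF finF FF] S0 by (simp add: pm_eq)
  have "card (badSU n S U) = card F ^ 10" unfolding badSU_PiE F_def by (simp add: card_PiE)
  moreover have "card (graph_space n) = card (perfect_matchings n) ^ 10"
    unfolding graph_space_def by (simp add: card_PiE)
  moreover have "real (card F) ^ 10 \<le> ((real (card U) / (real n - real (2 * t))) ^ t * real (card (perfect_matchings n))) ^ 10"
    by (rule power_mono[OF cF]) simp
  ultimately show ?thesis by (simp add: t_def power_mult_distrib)
qed

lemma geom_half: "k \<le> M \<Longrightarrow> (\<Sum>s\<in>{k..<M}. (1/2::real) ^ s) + 2 * (1/2) ^ M = 2 * (1/2) ^ k"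
proof (induction M)
  case 0 then show ?case by simp
next
  case (Suc M)
  show ?case
  proof (cases "k = Suc M")
    case True then show ?thesis by simp
  next
    case False
    then have kM: "k \<le> M" using Suc.prems by simp
    have "(\<Sum>s\<in>{k..<Suc M}. (1/2::real) ^ s) = (\<Sum>s\<in>{k..<M}. (1/2::real) ^ s) + (1/2) ^ M"
      using kM by simp
    then show ?thesis using Suc.IH[OF kM] by simp
  qed
qed

lemma geom_half_le: "(\<Sum>s\<in>{k..<M}. (1/2::real) ^ s) \<le> 2 * (1/2) ^ k"
proof (cases "k \<le> M")
  case True
  have "0 \<le> 2 * (1/2::real) ^ M" by simp
  then show ?thesis using geom_half[OF True] by linarith
next
  case False then show ?thesis by simp
qed

lemma inner_bound:
  assumes s5: "5 \<le> s" and su: "s \<le> u" "u < 2 * s" and sn: "30000 * s \<le> n"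
  shows "real (card (\<Union>S\<in>subs n s. \<Union>U\<in>subs n u. badSU n S U)) \<le> (1/4) ^ s * real (card (graph_space n))"
proof -
  define R where "R = ((real u / (real n - real (2 * (s div 2)))) ^ (s div 2)) ^ 10 * real (card (graph_space n))"
  have each: "real (card (badSU n S U)) \<le> R" if S: "S \<in> subs n s" and U: "U \<in> subs n u" for S U
  proof -
    have "2 * (card S div 2) < n" using S sn s5 unfolding subs_def by simp
    then show ?thesis using badSU_card[of S n U] S U unfolding subs_def R_def by simp
  qed
  have "real (card (\<Union>S\<in>subs n s. \<Union>U\<in>subs n u. badSU n S U))
      \<le> (\<Sum>S\<in>subs n s. real (card (\<Union>U\<in>subs n u. badSU n S U)))"
    by (rule real_card_UN_le[OF finite_subs])
  also have "\<dots> \<le> (\<Sum>S\<in>subs n s. \<Sum>U\<in>subs n u. real (card (badSU n S U)))"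
    by (rule sum_mono) (rule real_card_UN_le[OF finite_subs])
  also have "\<dots> \<le> (\<Sum>S\<in>subs n s. \<Sum>U\<in>subs n u. R)"
    by (intro sum_mono each)
  also have "\<dots> = real (n choose s) * real (n choose u) * R"
    by (simp add: card_subs)
  also have "\<dots> = real (n choose s) * real (n choose u) * (real u / (real n - real (2 * (s div 2)))) ^ (10 * (s div 2))
       * real (card (graph_space n))"
    unfolding R_def by (simp add: power_mult[symmetric] mult.commute)
  also have "\<dots> \<le> (1/4) ^ s * real (card (graph_space n))"
    by (rule mult_right_mono[OF term_bound[OF s5 su sn]]) simp
  finally show ?thesis .
qed

lemma bad_bound:
  assumes k5: "5 \<le> k" and Mn: "30000 * M \<le> n"
  shows "real (card (badAll n k M)) \<le> 2 * (1/2) ^ k * real (card (graph_space n))"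
proof -
  define G where "G = real (card (graph_space n))"
  have mid: "real (card (\<Union>u\<in>{s..<2 * s}. \<Union>S\<in>subs n s. \<Union>U\<in>subs n u. badSU n S U)) \<le> (1/2) ^ s * G"
    if s: "s \<in> {k..<M}" for s
  proof -
    have s5: "5 \<le> s" and sn: "30000 * s \<le> n" using s k5 Mn by auto
    have "real (card (\<Union>u\<in>{s..<2 * s}. \<Union>S\<in>subs n s. \<Union>U\<in>subs n u. badSU n S U))
       \<le> (\<Sum>u\<in>{s..<2 * s}. real (card (\<Union>S\<in>subs n s. \<Union>U\<in>subs n u. badSU n S U)))"
      by (rule real_card_UN_le) simp
    also have "\<dots> \<le> (\<Sum>u\<in>{s..<2 * s}. (1/4) ^ s * G)"
      by (rule sum_mono) (use inner_bound s5 sn in \<open>auto simp: G_def\<close>)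
    also have "\<dots> = real s * (1/4) ^ s * G" by simp
    also have "\<dots> \<le> (1/2) ^ s * G"
    proof (rule mult_right_mono)
      have "real s \<le> 2 ^ s" using less_exp[of s] by (metis of_nat_le_iff of_nat_numeral of_nat_power less_imp_le)
      then have "real s * (1/4) ^ s \<le> 2 ^ s * (1/4) ^ s" by (rule mult_right_mono) simp
      also have "\<dots> = (1/2) ^ s" by (simp add: power_mult_distrib[symmetric])
      finally show "real s * (1/4) ^ s \<le> (1/2) ^ s" .
      show "0 \<le> G" by (simp add: G_def)
    qed
    finally show ?thesis .
  qed
  have "real (card (badAll n k M)) \<le> (\<Sum>s\<in>{k..<M}. real (card (\<Union>u\<in>{s..<2 * s}. \<Union>S\<in>subs n s. \<Union>U\<in>subs n u. badSU n S U)))"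
    unfolding badAll_def by (rule real_card_UN_le) simp
  also have "\<dots> \<le> (\<Sum>s\<in>{k..<M}. (1/2) ^ s * G)" by (rule sum_mono) (rule mid)
  also have "\<dots> = (\<Sum>s\<in>{k..<M}. (1/2) ^ s) * G" by (simp add: sum_distrib_right)
  also have "\<dots> \<le> 2 * (1/2) ^ k * G" by (rule mult_right_mono[OF geom_half_le]) (simp add: G_def)
  finally show ?thesis by (simp add: G_def)
qed

lemma expansion:
  assumes ms: "ms \<in> graph_space n" and T: "T \<subseteq> {..<n}" and cT: "card T = k"
    and nb: "ms \<notin> badAll n k M" and small: "card (ball n ms T i) < M"
  shows "2 * card (ball n ms T i) \<le> card (ball n ms T (Suc i))"
proof (rule ccontr)
  assume "\<not> ?thesis"
  then have lt: "card (ball n ms T (Suc i)) < 2 * card (ball n ms T i)" by simp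
  define S where "S = ball n ms T i"
  define U where "U = ball n ms T (Suc i)"
  have kS: "k \<le> card S"
  proof -
    have "T \<subseteq> S" unfolding S_def using ball_mono[of 0 i n ms T] ball0[OF T] by simp
    then show ?thesis using cT card_mono[OF finite_ball] unfolding S_def by blast
  qed
  have SU: "card S \<le> card U" unfolding S_def U_def by (rule card_mono[OF finite_ball ball_mono]) simp
  have inbad: "ms \<in> badSU n S U"
    unfolding badSU_def using ms ball_step[OF ms] unfolding S_def U_def by blast
  have "ms \<in> badAll n k M"
    unfolding badAll_def
  proof (intro UN_I)
    show "card S \<in> {k..<M}" using kS small unfolding S_def by simp
    show "card U \<in> {card S..<2 * card S}" using SU lt unfolding S_def U_def by simp
    show "S \<in> subs n (card S)" unfolding subs_def S_def using ball_sub by simp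
    show "U \<in> subs n (card U)" unfolding subs_def U_def using ball_sub by simp
    show "ms \<in> badSU n S U" by (rule inbad)
  qed
  then show False using nb by simp
qed

lemma det_main:
  assumes ms: "ms \<in> graph_space n" and T: "T \<subseteq> {..<n}" and cT: "card T = k" and k1: "1 \<le> k"
    and nb: "ms \<notin> badAll n k M"
  shows "\<exists>i. M \<le> card (ball n ms T i)"
    and "valid_choice n ms T ((LEAST i. M \<le> card (ball n ms T i)) - 1) \<sigma> \<Longrightarrow>
       total_capacity n ms T ((LEAST i. M \<le> card (ball n ms T i)) - 1) \<sigma>
         \<le> 10 * n + 10 * ((LEAST i. M \<le> card (ball n ms T i)) - 1) * M"
    and "1 \<le> (LEAST i. M \<le> card (ball n ms T i)) - 1 \<Longrightarrow>
       2 ^ ((LEAST i. M \<le> card (ball n ms T i)) - 1) * k < M"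
proof -
  have gr: "min M (2 ^ i * card T) \<le> card (ball n ms T i)" for i
    by (rule growth[OF ms T]) (rule expansion[OF ms T cT nb])
  have "M \<le> card (ball n ms T M)"
  proof -
    have "M < 2 ^ M" by (rule less_exp)
    also have "\<dots> \<le> 2 ^ M * k" using k1 by simp
    finally show ?thesis using gr[of M] cT by simp
  qed
  then show ex: "\<exists>i. M \<le> card (ball n ms T i)" by blast
  define r where "r = (LEAST i. M \<le> card (ball n ms T i)) - 1"
  have rsmall: "card (ball n ms T r) < M" if r1: "1 \<le> r"
  proof -
    have "r < (LEAST i. M \<le> card (ball n ms T i))" using r1 unfolding r_def by simp
    then have "\<not> M \<le> card (ball n ms T r)" by (rule not_less_Least)
    then show ?thesis by simp
  qed
  show "2 ^ r * k < M" if r1: "1 \<le> r"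
    using rsmall[OF r1] gr[of r] cT by (simp add: min_def split: if_splits)
  show "total_capacity n ms T r \<sigma> \<le> 10 * n + 10 * r * M" if v: "valid_choice n ms T r \<sigma>"
  proof -
    have "total_capacity n ms T r \<sigma> \<le> 10 * n + 10 * r * card (layer n ms T r)"
      by (rule total_bound[OF ms v])
    also have "10 * r * card (layer n ms T r) \<le> 10 * r * M"
    proof (cases "r = 0")
      case True then show ?thesis by simp
    next
      case False
      then have "card (layer n ms T r) \<le> M"
        using rsmall card_mono[OF finite_ball layer_sub_ball, of n ms T r] by simp
      then show ?thesis by simp
    qed
    finally show ?thesis by simp
  qed
qed

lemma PM_nonempty: assumes "even n" shows "perfect_matchings n \<noteq> {}"
proof -
  define f where "f i = (if i < n then (if even i then i + 1 else i - 1) else i)" for i :: nat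
  have "f \<in> perfect_matchings n"
    unfolding perfect_matchings_def
  proof (intro CollectI conjI allI impI)
    fix i assume i: "i < n"
    show "f i < n"
    proof (cases "even i")
      case True
      then have "i + 1 < n" using i assms by (metis add.commute dvd_add_triv_left_iff even_Suc le_eq_less_or_eq
            odd_one plus_1_eq_Suc Suc_leI)
      then show ?thesis using True i by (simp add: f_def)
    next
      case False then show ?thesis using i by (simp add: f_def)
    qed
    show "f i \<noteq> i"
    proof (cases "even i")
      case True then show ?thesis using i by (simp add: f_def)
    next
      case False
      then have "i \<ge> 1" by (cases i) auto
      then show ?thesis using False i by (simp add: f_def)
    qed
    show "f (f i) = i"
    proof (cases "even i")
      case True
      then have "i + 1 < n" using i assms by (metis add.commute dvd_add_triv_left_iff even_Suc le_eq_less_or_eq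
            odd_one plus_1_eq_Suc Suc_leI)
      then show ?thesis using True i by (simp add: f_def)
    next
      case False
      then have "i \<ge> 1" by (cases i) auto
      then show ?thesis using False i by (simp add: f_def)
    qed
  next
    fix i assume "n \<le> i" then show "f i = i" by (simp add: f_def)
  qed
  then show ?thesis by blast
qed

lemma graph_space_ok: assumes "even n" shows "graph_space n \<noteq> {}" "finite (graph_space n)"
proof -
  show "graph_space n \<noteq> {}" unfolding graph_space_def using PM_nonempty[OF assms]
    by (simp add: PiE_eq_empty_iff)
  show "finite (graph_space n)" unfolding graph_space_def pm_eq
    by (rule finite_PiE) (simp_all add: finite_pm)
qed

lemma badAll_sub: "badAll n k M \<subseteq> graph_space n"
  unfolding badAll_def badSU_def by blast

lemma r_small:
  fixes a x :: real and r k M :: nat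
  assumes a: "a \<ge> 40" and x: "x / 2 powr a \<ge> 2" and xpos: "x > 0"
    and k: "real k \<ge> x / 2 powr a - 1" and M: "real M \<le> 20 * x / a" and rk: "2 ^ r * k < M"
  shows "real r < 2 * a"
proof -
  define P where "P = 2 powr a"
  define y where "y = (2::real) ^ r"
  have p: "P > 0" unfolding P_def by simp
  have apos: "a > 0" using a by simp
  have y0: "y > 0" unfolding y_def by simp
  have k2: "real k \<ge> x / (2 * P)"
  proof -
    define t where "t = x / P"
    have t2: "t \<ge> 2" using x unfolding t_def P_def .
    have "x / (2 * P) = t / 2" unfolding t_def by simp
    also have "\<dots> \<le> t - 1" using t2 by linarith
    finally show ?thesis using k unfolding t_def P_def by linarith
  qed
  have "real (2 ^ r * k) < real M" using rk by (simp only: of_nat_less_iff)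
  then have "y * real k < 20 * x / a" using M unfolding y_def by simp
  moreover have "y * (x / (2 * P)) \<le> y * real k" by (rule mult_left_mono[OF k2]) (use y0 in simp)
  ultimately have "y * (x / (2 * P)) < 20 * x / a" by linarith
  then have "y * (x / (2 * P)) * (2 * P) < 20 * x / a * (2 * P)"
    by (rule mult_strict_right_mono) (use p in simp)
  then have "y * x < (40 * P / a) * x" using p apos by (simp add: field_simps)
  then have y1: "y < 40 * P / a" using xpos by (rule mult_less_cancel_right_pos[THEN iffD1, rotated])
  have "40 * P / a = (40 / a) * P" by simp
  also have "\<dots> \<le> 1 * P" by (rule mult_right_mono) (use a p in simp_all)
  also have "\<dots> \<le> P * P"
  proof (rule mult_right_mono)
    show "1 \<le> P" unfolding P_def using a by (simp add: ge_one_powr_ge_zero)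
  qed (use p in simp)
  also have "\<dots> = 2 powr (2 * a)" unfolding P_def by (simp add: powr_add[symmetric])
  finally have "y < 2 powr (2 * a)" using y1 by linarith
  moreover have "y = 2 powr (real r)" unfolding y_def by (simp add: powr_realpow)
  ultimately have "2 powr (real r) < 2 powr (2 * a)" by simp
  then show ?thesis by simp
qed

lemma prob_n:
  fixes \<alpha> :: real and n :: nat
  assumes ev: "even n" and n0: "n > 0" and T: "T \<subseteq> {..<n}" and cT: "card T = k_param \<alpha> n"
    and A: "log 2 (real n) powr \<alpha> \<ge> 600000"
    and B: "real n / 2 powr (log 2 (real n) powr \<alpha>) \<ge> 6"
  shows "good_prob \<alpha> 410 n T \<ge> 1 - 2 * (1/2) ^ (k_param \<alpha> n)"
proof -
  define a where "a = log 2 (real n) powr \<alpha>"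
  define k where "k = k_param \<alpha> n"
  define m where "m = m_param \<alpha> n"
  define M where "M = 2 * m"
  define \<Omega> where "\<Omega> = graph_space n"
  have apos: "a \<ge> 600000" using A by (simp add: a_def)
  have npos: "real n > 0" using n0 by simp
  have kge: "real k \<ge> real n / 2 powr a - 1"
  proof -
    have "real n / 2 powr a \<ge> 0" by simp
    then have "real (nat \<lfloor>real n / 2 powr a\<rfloor>) = real_of_int \<lfloor>real n / 2 powr a\<rfloor>" by simp
    moreover have "real_of_int \<lfloor>real n / 2 powr a\<rfloor> > real n / 2 powr a - 1" by linarith
    ultimately show ?thesis unfolding k_def k_param_def a_def by linarith
  qed
  have k5: "5 \<le> k" using kge B by (simp add: a_def)
  have mle: "real m \<le> 10 * real n / a"
  proof -
    have "10 * real n / a \<ge> 0" using apos by simp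
    then have "real (nat \<lfloor>10 * real n / a\<rfloor>) = real_of_int \<lfloor>10 * real n / a\<rfloor>" by simp
    moreover have "real_of_int \<lfloor>10 * real n / a\<rfloor> \<le> 10 * real n / a" by linarith
    ultimately show ?thesis unfolding m_def m_param_def a_def by linarith
  qed
  have Mle: "real M \<le> 20 * real n / a" using mle by (simp add: M_def)
  have Mn: "30000 * M \<le> n"
  proof -
    have "real (30000 * M) \<le> 30000 * (20 * real n / a)" using Mle by simp
    also have "\<dots> = real n * (600000 / a)" by simp
    also have "\<dots> \<le> real n * 1" using apos npos by (intro mult_left_mono) auto
    finally show ?thesis by simp
  qed
  have good: "good_event \<alpha> 410 n T ms" if ms: "ms \<in> \<Omega>" and nb: "ms \<notin> badAll n k M" for ms
  proof -
    have ms': "ms \<in> graph_space n" using ms by (simp add: \<Omega>_def)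
    have cT': "card T = k" using cT by (simp add: k_def)
    have k1: "1 \<le> k" using k5 by simp
    note D = det_main[OF ms' T cT' k1 nb]
    have rdef: "r_param \<alpha> n ms T = (LEAST i. M \<le> card (ball n ms T i)) - 1"
      unfolding r_param_def M_def m_def by simp
    have tot: "real (total_capacity n ms T (r_param \<alpha> n ms T) \<sigma>) \<le> 410 * real n"
      if v: "valid_choice n ms T (r_param \<alpha> n ms T) \<sigma>" for \<sigma>
    proof -
      define r where "r = r_param \<alpha> n ms T"
      have t1: "total_capacity n ms T r \<sigma> \<le> 10 * n + 10 * r * M"
        using D(2)[of \<sigma>] v unfolding r_def rdef by simp
      have "real (10 * r * M) \<le> 400 * real n"
      proof (cases "r = 0")
        case True then show ?thesis by simp
      next
        case False
        then have rk: "2 ^ r * k < M" using D(3) unfolding r_def rdef by simp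
        have rl: "real r < 2 * a"
          by (rule r_small[OF _ _ npos kge Mle rk]) (use apos B in \<open>auto simp: a_def\<close>)
        have "real (10 * r * M) = 10 * real r * real M" by simp
        also have "\<dots> \<le> 10 * (2 * a) * (20 * real n / a)"
          using rl Mle by (intro mult_mono) auto
        also have "\<dots> = 400 * real n" using apos by simp
        finally show ?thesis .
      qed
      moreover have "real (total_capacity n ms T r \<sigma>) \<le> real (10 * n + 10 * r * M)"
        using t1 by (rule of_nat_mono)
      moreover have "real (10 * n + 10 * r * M) = 10 * real n + real (10 * r * M)" by simp
      ultimately have "real (total_capacity n ms T r \<sigma>) \<le> 10 * real n + 400 * real n" by linarith
      then show ?thesis unfolding r_def by simp
    qed
    show ?thesis unfolding good_event_def
      using D(1) tot unfolding M_def m_def by simp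
  qed
  have finO: "finite \<Omega>" and neO: "\<Omega> \<noteq> {}" using graph_space_ok[OF ev] by (simp_all add: \<Omega>_def)
  have cO: "real (card \<Omega>) > 0" using finO neO by (simp add: card_gt_0_iff)
  have sub: "\<Omega> - badAll n k M \<subseteq> \<Omega> \<inter> {ms. good_event \<alpha> 410 n T ms}" using good by blast
  have "real (card \<Omega>) - real (card (badAll n k M)) \<le> real (card (\<Omega> - badAll n k M))"
  proof -
    have "card (\<Omega> - badAll n k M) = card \<Omega> - card (badAll n k M)"
      by (rule card_Diff_subset) (rule finite_subset[OF badAll_sub finO[unfolded \<Omega>_def]], unfold \<Omega>_def, rule badAll_sub)
    moreover have "card (badAll n k M) \<le> card \<Omega>" by (rule card_mono[OF finO]) (unfold \<Omega>_def, rule badAll_sub)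
    ultimately show ?thesis by simp
  qed
  also have "\<dots> \<le> real (card (\<Omega> \<inter> {ms. good_event \<alpha> 410 n T ms}))"
  proof -
    have "finite (\<Omega> \<inter> {ms. good_event \<alpha> 410 n T ms})" using finO by simp
    then have "card (\<Omega> - badAll n k M) \<le> card (\<Omega> \<inter> {ms. good_event \<alpha> 410 n T ms})"
      using sub by (rule card_mono)
    then show ?thesis by (rule of_nat_mono)
  qed
  finally have c1: "real (card \<Omega>) - real (card (badAll n k M)) \<le> real (card (\<Omega> \<inter> {ms. good_event \<alpha> 410 n T ms}))" .
  have bb: "real (card (badAll n k M)) \<le> 2 * (1/2) ^ k * real (card \<Omega>)"
    using bad_bound[OF k5 Mn] by (simp add: \<Omega>_def)
  have "good_prob \<alpha> 410 n T = real (card (\<Omega> \<inter> {ms. good_event \<alpha> 410 n T ms})) / real (card \<Omega>)"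
    unfolding good_prob_def \<Omega>_def using measure_pmf_of_set[OF neO[unfolded \<Omega>_def] finO[unfolded \<Omega>_def]] by simp
  also have "\<dots> \<ge> (real (card \<Omega>) - 2 * (1/2) ^ k * real (card \<Omega>)) / real (card \<Omega>)"
    by (rule divide_right_mono) (use c1 bb cO in linarith)+
  also have "(real (card \<Omega>) - 2 * (1/2) ^ k * real (card \<Omega>)) / real (card \<Omega>) = 1 - 2 * (1/2) ^ k"
    using cO by (simp add: diff_divide_distrib)
  finally show ?thesis by (simp add: k_def)
qed

lemma real_ev_to_nat:
  assumes "eventually P (at_top :: real filter)"
  shows "eventually (\<lambda>h::nat. P (real (2 * h))) sequentially"
proof -
  have f: "filterlim (\<lambda>h::nat. real (2 * h)) at_top sequentially"
    by (rule filterlim_compose[OF filterlim_real_sequentially mult_nat_left_at_top]) simp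
  then show ?thesis using assms unfolding filterlim_iff by blast
qed

lemma alpha_aux:
  fixes l e :: real
  assumes "1 \<le> l" "l < 3" "0 < e" "e < 1/10"
  shows "1/2 \<le> l / (l + 1 - e) \<and> l / (l + 1 - e) \<le> 4/5"
proof -
  have d: "l + 1 - e > 0" using assms by linarith
  have "1/2 \<le> l / (l + 1 - e)" using d assms by (simp add: field_simps)
  moreover have "l / (l + 1 - e) \<le> 4/5" using d assms by (simp add: field_simps)
  ultimately show ?thesis by simp
qed

lemma alpha_bounds:
  assumes e: "0 < \<epsilon>" "\<epsilon> < 1/10"
  shows "1/2 \<le> log 2 5 / (log 2 5 + 1 - \<epsilon>)" "log 2 5 / (log 2 5 + 1 - \<epsilon>) \<le> 4/5"
proof -
  have l1: "log 2 (5::real) \<ge> 1"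
  proof -
    have "log 2 (2::real) \<le> log 2 5" by simp
    then show ?thesis by simp
  qed
  have l3: "log 2 (5::real) < 3"
  proof -
    have "log 2 (5::real) < log 2 8" by simp
    moreover have "log 2 (8::real) = 3"
    proof -
      have "log 2 ((2::real) powr 3) = 3" by (rule log_powr_cancel) simp_all
      moreover have "(2::real) powr 3 = 8" by simp
      ultimately show ?thesis by simp
    qed
    ultimately show ?thesis by simp
  qed
  have d: "log 2 5 + 1 - \<epsilon> > 0" using l1 e by linarith
  show "1/2 \<le> log 2 5 / (log 2 5 + 1 - \<epsilon>)" "log 2 5 / (log 2 5 + 1 - \<epsilon>) \<le> 4/5"
    using alpha_aux[OF l1 l3 e] by simp_all
qed

lemma asymp_conditions:
  fixes \<alpha> :: real
  assumes a1: "1/2 \<le> \<alpha>" and a2: "\<alpha> \<le> 4/5"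
  shows "eventually (\<lambda>x::real. log 2 x powr \<alpha> \<ge> 600000 \<and> x / 2 powr (log 2 x powr \<alpha>) \<ge> K \<and> x \<ge> 1) at_top"
proof -
  have lim1: "filterlim (\<lambda>x::real. log 2 x powr (1/2)) at_top at_top" by real_asymp
  have lim2: "filterlim (\<lambda>x::real. x / 2 powr (log 2 x powr (4/5))) at_top at_top" by real_asymp
  have lim3: "filterlim (\<lambda>x::real. log 2 x) at_top at_top" by real_asymp
  have ev1: "eventually (\<lambda>x::real. log 2 x powr (1/2) \<ge> 600000) at_top" using lim1 by (simp add: filterlim_at_top)
  have ev2: "eventually (\<lambda>x::real. x / 2 powr (log 2 x powr (4/5)) \<ge> K) at_top" using lim2 by (simp add: filterlim_at_top)
  have ev3: "eventually (\<lambda>x::real. log 2 x \<ge> 1) at_top" using lim3 by (simp add: filterlim_at_top)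
  have ev4: "eventually (\<lambda>x::real. x \<ge> 1) at_top" by (rule eventually_ge_at_top)
  show ?thesis using ev1 ev2 ev3 ev4
  proof eventually_elim
    case (elim x)
    have m1: "log 2 x powr (1/2) \<le> log 2 x powr \<alpha>" by (rule powr_mono[OF a1 elim(3)])
    have m2: "log 2 x powr \<alpha> \<le> log 2 x powr (4/5)" by (rule powr_mono[OF a2 elim(3)])
    have "2 powr (log 2 x powr \<alpha>) \<le> 2 powr (log 2 x powr (4/5))" using m2 by simp
    then have "x / 2 powr (log 2 x powr (4/5)) \<le> x / 2 powr (log 2 x powr \<alpha>)"
      using elim(4) by (intro divide_left_mono) auto
    then show ?case using m1 elim by linarith
  qed
qed

theorem lemma3p6:
  "\<exists>\<epsilon>0>0. \<forall>\<epsilon>. 0 < \<epsilon> \<and> \<epsilon> < \<epsilon>0 \<longrightarrow>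
     (let \<alpha> = log 2 5 / (log 2 5 + 1 - \<epsilon>) in
      \<exists>C>0. \<forall>Ts :: nat \<Rightarrow> nat set.
        (\<forall>h. Ts h \<subseteq> {..<2 * h} \<and> card (Ts h) = k_param \<alpha> (2 * h)) \<longrightarrow>
        (\<lambda>h. good_prob \<alpha> C (2 * h) (Ts h)) \<longlonglongrightarrow> 1)"
proof (intro exI[of _ "1/10::real"] conjI allI impI)
  show "(0::real) < 1/10" by simp
  fix \<epsilon> :: real assume e: "0 < \<epsilon> \<and> \<epsilon> < 1/10"
  define \<alpha> where "\<alpha> = log 2 5 / (log 2 5 + 1 - \<epsilon>)"
  have a1: "1/2 \<le> \<alpha>" and a2: "\<alpha> \<le> 4/5" using alpha_bounds[of \<epsilon>] e by (simp_all add: \<alpha>_def)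
  have main: "(\<lambda>h. good_prob \<alpha> 410 (2 * h) (Ts h)) \<longlonglongrightarrow> 1"
    if Ts: "\<forall>h. Ts h \<subseteq> {..<2 * h} \<and> card (Ts h) = k_param \<alpha> (2 * h)" for Ts
  proof -
    define kk where "kk h = k_param \<alpha> (2 * h)" for h
    have evK: "eventually (\<lambda>h. log 2 (real (2 * h)) powr \<alpha> \<ge> 600000 \<and>
        real (2 * h) / 2 powr (log 2 (real (2 * h)) powr \<alpha>) \<ge> K \<and> real (2 * h) \<ge> 1) sequentially" for K
      using real_ev_to_nat[OF asymp_conditions[OF a1 a2, of K]] by simp
    have kklim: "filterlim kk at_top sequentially"
      unfolding filterlim_at_top
    proof
      fix Z :: nat
      show "eventually (\<lambda>h. Z \<le> kk h) sequentially"
        using evK[of "real Z + 1"]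
      proof eventually_elim
        case (elim h)
        have "real Z + 1 \<le> real (2 * h) / 2 powr (log 2 (real (2 * h)) powr \<alpha>)" using elim by simp
        moreover have "real_of_int \<lfloor>real (2 * h) / 2 powr (log 2 (real (2 * h)) powr \<alpha>)\<rfloor>
            > real (2 * h) / 2 powr (log 2 (real (2 * h)) powr \<alpha>) - 1" by linarith
        ultimately have "real Z < real_of_int \<lfloor>real (2 * h) / 2 powr (log 2 (real (2 * h)) powr \<alpha>)\<rfloor>"
          by linarith
        then show ?case unfolding kk_def k_param_def by linarith
      qed
    qed
    have low: "(\<lambda>h. 1 - 2 * (1/2::real) ^ kk h) \<longlonglongrightarrow> 1"
    proof -
      have "(\<lambda>n. (1/2::real) ^ n) \<longlonglongrightarrow> 0" by (rule LIMSEQ_realpow_zero) simp_all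
      then have "(\<lambda>h. (1/2::real) ^ kk h) \<longlonglongrightarrow> 0" by (rule filterlim_compose[OF _ kklim])
      then have "(\<lambda>h. 1 - 2 * (1/2::real) ^ kk h) \<longlonglongrightarrow> 1 - 2 * 0"
        by (intro tendsto_intros)
      then show ?thesis by simp
    qed
    have evlow: "eventually (\<lambda>h. 1 - 2 * (1/2::real) ^ kk h \<le> good_prob \<alpha> 410 (2 * h) (Ts h)) sequentially"
      using evK[of 6]
    proof eventually_elim
      case (elim h)
      have h0: "2 * h > 0" using elim by (cases h) auto
      show ?case unfolding kk_def
        by (rule prob_n) (use elim h0 Ts in auto)
    qed
    have evup: "eventually (\<lambda>h. good_prob \<alpha> 410 (2 * h) (Ts h) \<le> 1) sequentially"
      unfolding good_prob_def by (simp add: measure_pmf.prob_le_1)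
    show ?thesis by (rule tendsto_sandwich[OF evlow evup low tendsto_const])
  qed
  show "let \<alpha> = log 2 5 / (log 2 5 + 1 - \<epsilon>) in
      \<exists>C>0. \<forall>Ts :: nat \<Rightarrow> nat set.
        (\<forall>h. Ts h \<subseteq> {..<2 * h} \<and> card (Ts h) = k_param \<alpha> (2 * h)) \<longrightarrow>
        (\<lambda>h. good_prob \<alpha> C (2 * h) (Ts h)) \<longlonglongrightarrow> 1"
    unfolding Let_def \<alpha>_def[symmetric]
    by (intro exI[of _ "410::real"] conjI allI impI) (simp, rule main)
qed

end
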